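(* Let $X$ be an infinite-dimensional complex Banach space and $T$ a hyper-recurrent surjective linear isometry of $X$. Then $\overline{\mathrm{Hr}(T)}$ contains an infinite-dimensional $T$-invariant linear subspace.
   Context: $x$ is recurrent if $T^{\omega_n}x\to x$ for some strictly increasing sequence $(\omega_n)$ of positive integers; $\mathrm{Rec}(T)$ is the set of recurrent vectors. $\mathfrak{C}$ is the set of strictly increasing sequences $\omega$ with $T^{\omega_n}x\to x$ for some $x\ne0$; $\mathfrak{L}(\omega)=\{x:T^{\omega_n}x\to x\}$. $\mathrm{Hr}(T)$ is the set of $x\in\mathrm{Rec}(T)$ such that $\mathfrak{L}(\omega)$ is dense for every $\omega\in\mathfrak{C}$ with $x\in\mathfrak{L}(\omega)$; $T$ is hyper-recurrent if $\mathrm{Rec}(T)$ is dense and $\mathrm{Hr}(T)\ne\emptyset$. *)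

theory Defs
  imports "HOL-Analysis.Analysis"
begin

definition complex_banach_structure :: "(complex \<Rightarrow> 'a::banach \<Rightarrow> 'a) \<Rightarrow> bool" where
  "complex_banach_structure smul \<longleftrightarrow>
     Vector_Spaces.vector_space smul \<and>
     (\<forall>r x. smul (complex_of_real r) x = r *\<^sub>R x) \<and>
     (\<forall>c x. norm (smul c x) = cmod c * norm x)"

definition inf_dim_subspace :: "(complex \<Rightarrow> 'a::banach \<Rightarrow> 'a) \<Rightarrow> 'a set \<Rightarrow> bool" where
  "inf_dim_subspace smul M \<longleftrightarrow>
     module.subspace smul M \<and> \<not> (\<exists>B. finite B \<and> module.span smul B = M)"

definition L_set :: "('a::topological_space \<Rightarrow> 'a) \<Rightarrow> (nat \<Rightarrow> nat) \<Rightarrow> 'a set" where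
  "L_set T \<omega> = {x. (\<lambda>n. (T ^^ \<omega> n) x) \<longlonglongrightarrow> x}"

definition Rec :: "('a::topological_space \<Rightarrow> 'a) \<Rightarrow> 'a set" where
  "Rec T = {x. \<exists>\<omega>. strict_mono \<omega> \<and> (\<forall>n. 0 < \<omega> n) \<and> x \<in> L_set T \<omega>}"

definition C_set :: "('a::{topological_space,zero} \<Rightarrow> 'a) \<Rightarrow> (nat \<Rightarrow> nat) set" where
  "C_set T = {\<omega>. strict_mono \<omega> \<and> (\<forall>n. 0 < \<omega> n) \<and> (\<exists>x. x \<noteq> 0 \<and> x \<in> L_set T \<omega>)}"

definition Hr :: "('a::{topological_space,zero} \<Rightarrow> 'a) \<Rightarrow> 'a set" where
  "Hr T = {x \<in> Rec T. \<forall>\<omega> \<in> C_set T. x \<in> L_set T \<omega> \<longrightarrow> closure (L_set T \<omega>) = UNIV}"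

definition hyper_recurrent :: "('a::{topological_space,zero} \<Rightarrow> 'a) \<Rightarrow> bool" where
  "hyper_recurrent T \<longleftrightarrow> closure (Rec T) = UNIV \<and> Hr T \<noteq> {}"

end

theory Submission
  imports Defs "HOL-Computational_Algebra.Fundamental_Theorem_Algebra"
begin


locale hset =
  fixes smul :: "complex \<Rightarrow> 'a::banach \<Rightarrow> 'a" and T :: "'a \<Rightarrow> 'a"
  assumes cbs: "complex_banach_structure smul"
    and lin: "Vector_Spaces.linear smul smul T"
    and iso: "\<And>x. norm (T x) = norm x"
begin

lemma vs: "vector_space smul" using cbs unfolding complex_banach_structure_def by auto

sublocale V: vector_space smul by (rule vs)

lemma smul_norm: "norm (smul c x) = cmod c * norm x"
  using cbs unfolding complex_banach_structure_def by auto

lemma T_add: "T (x + y) = T x + T y" using lin by (simp add: Vector_Spaces.linear_iff)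
lemma T_smul: "T (smul c x) = smul c (T x)" using lin by (simp add: Vector_Spaces.linear_iff)
lemma T_0[simp]: "T 0 = 0" by (metis T_smul V.scale_zero_left)
lemma T_diff: "T (x - y) = T x - T y" by (metis T_add add_diff_cancel diff_add_cancel)
lemma T_sum: "T (sum f A) = (\<Sum>a\<in>A. T (f a))"
  by (induct A rule: infinite_finite_induct) (auto simp: T_0 T_add)

lemma Tn_add: "(T^^n) (x + y) = (T^^n) x + (T^^n) y" by (induct n) (auto simp: T_add)
lemma Tn_smul: "(T^^n) (smul c x) = smul c ((T^^n) x)" by (induct n) (auto simp: T_smul)
lemma Tn_0: "(T^^n) 0 = 0" by (induct n) (auto simp: T_0)
lemma Tn_diff: "(T^^n) (x - y) = (T^^n) x - (T^^n) y" by (induct n) (auto simp: T_diff)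
lemma Tn_norm: "norm ((T^^n) x) = norm x" by (induct n) (auto simp: iso)
lemma Tn_sum: "(T^^n) (sum f A) = (\<Sum>a\<in>A. (T^^n) (f a))"
  by (induct A rule: infinite_finite_induct) (auto simp: Tn_0 Tn_add)
lemma Tn_T: "(T^^n) (T x) = T ((T^^n) x)" by (metis funpow_swap1)

lemma smul_diff_norm: "norm (smul a x - smul b x) = cmod (a - b) * norm x"
  by (metis V.scale_left_diff_distrib smul_norm)

lemma smul_tendsto:
  assumes "(f \<longlongrightarrow> a) F" shows "((\<lambda>n. smul (f n) x) \<longlongrightarrow> smul a x) F"
proof -
  have "((\<lambda>n. f n - a) \<longlongrightarrow> 0) F" using assms by (rule LIM_zero)
  then have "((\<lambda>n. cmod (f n - a)) \<longlongrightarrow> 0) F" by (rule tendsto_norm_zero)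
  then have "((\<lambda>n. cmod (f n - a) * norm x) \<longlongrightarrow> 0) F" by (rule tendsto_mult_left_zero)
  then have "((\<lambda>n. norm (smul (f n) x - smul a x)) \<longlongrightarrow> 0) F"
    by (simp add: smul_diff_norm)
  then show ?thesis by (rule LIM_zero_cancel[OF tendsto_norm_zero_cancel])
qed

definition opE :: "complex poly \<Rightarrow> 'a \<Rightarrow> 'a" where
  "opE p u = (\<Sum>k\<le>degree p. smul (coeff p k) ((T^^k) u))"

lemma opE_upto: assumes "degree p \<le> N"
  shows "opE p u = (\<Sum>k\<le>N. smul (coeff p k) ((T^^k) u))"
  unfolding opE_def
  by (rule sum.mono_neutral_left) (use assms in \<open>auto intro!: coeff_eq_0\<close>)

lemma opE_0[simp]: "opE 0 u = 0" by (simp add: opE_def)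

lemma opE_add: "opE (p + q) u = opE p u + opE q u"
proof -
  let ?N = "max (degree p) (degree (p+q)) + degree q"
  show ?thesis
    by (subst (1 2 3) opE_upto[where N = ?N]) (auto simp: sum.distrib V.scale_left_distrib)
qed

lemma opE_smult: "opE (smult a p) u = smul a (opE p u)"
  by (subst (1 2) opE_upto[where N="degree p"]) (auto simp: V.scale_sum_right)

lemma opE_pCons: "opE (pCons a p) u = smul a u + T (opE p u)"
proof -
  have "opE (pCons a p) u = (\<Sum>k\<le>Suc (degree p). smul (coeff (pCons a p) k) ((T^^k) u))"
    by (rule opE_upto) (simp add: degree_pCons_le)
  also have "\<dots> = smul a u + (\<Sum>k\<le>degree p. smul (coeff p k) ((T^^Suc k) u))"
    by (subst sum.atMost_Suc_shift) simp
  also have "\<dots> = smul a u + T (opE p u)"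
    by (simp add: opE_def T_sum T_smul)
  finally show ?thesis .
qed

lemma opE_mult: "opE (p * q) u = opE p (opE q u)"
proof (induct p rule: pCons_induct)
  case 0 then show ?case by simp
next
  case (pCons a p)
  then show ?case by (simp add: opE_add opE_smult opE_pCons)
qed

lemma opE_const: "opE [:a:] u = smul a u"
  by (simp add: opE_def)

lemma opE_linfac: "opE [:-r, 1:] u = T u - smul r u"
  by (simp add: opE_pCons opE_const T_smul)

lemma opE_uadd: "opE p (u + v) = opE p u + opE p v"
  by (simp add: opE_def Tn_add V.scale_right_distrib sum.distrib)
lemma opE_usmul: "opE p (smul c u) = smul c (opE p u)"
  by (simp add: opE_def Tn_smul V.scale_sum_right mult.commute)
lemma opE_udiff: "opE p (u - v) = opE p u - opE p v"
  by (simp add: opE_def Tn_diff V.scale_right_diff_distrib sum_subtractf)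
lemma opE_u0: "opE p 0 = 0"
  by (simp add: opE_def Tn_0)
lemma opE_usum: "opE p (sum f A) = (\<Sum>a\<in>A. opE p (f a))"
  by (induct A rule: infinite_finite_induct) (auto simp: opE_u0 opE_uadd)
lemma Tn_comm: "(T^^k) ((T^^n) u) = (T^^n) ((T^^k) u)"
  by (metis add.commute comp_apply funpow_add)
lemma opE_Tn: "opE p ((T^^n) u) = (T^^n) (opE p u)"
  unfolding opE_def Tn_sum Tn_smul by (rule sum.cong[OF refl]) (simp add: Tn_comm)
lemma opE_T: "opE p (T u) = T (opE p u)"
  using opE_Tn[of p 1 u] by simp

lemma opE_bound: "norm (opE p u) \<le> (\<Sum>k\<le>degree p. cmod (coeff p k)) * norm u"
  unfolding opE_def sum_distrib_right
  by (rule order_trans[OF norm_sum]) (simp add: smul_norm Tn_norm)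

lemma Tn_eigen: "T c = smul \<nu> c \<Longrightarrow> (T^^n) c = smul (\<nu>^n) c"
  by (induct n) (auto simp: T_smul)

lemma opE_eigen: assumes "T c = smul \<nu> c" shows "opE p c = smul (poly p \<nu>) c"
proof (induct p rule: pCons_induct)
  case 0 then show ?case by simp
next
  case (pCons a p)
  then show ?case by (simp add: opE_pCons T_smul assms V.scale_left_distrib mult.commute)
qed

lemma opE_monom: "opE (monom a k) u = smul a ((T^^k) u)"
  by (induct k) (auto simp: monom_Suc opE_pCons opE_const T_smul monom_0)

end


context hset
begin

lemma opE_bounded_below:
  fixes p :: "complex poly"
  assumes "p \<noteq> 0" "\<And>\<zeta>. cmod \<zeta> = 1 \<Longrightarrow> poly p \<zeta> \<noteq> 0"
  shows "\<exists>c>0. \<forall>u. c * norm u \<le> norm (opE p u)"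
  using assms
proof (induct "degree p" arbitrary: p rule: less_induct)
  case less
  show ?case
  proof (cases "degree p = 0")
    case True
    then obtain a where p: "p = [:a:]" by (metis degree_eq_zeroE)
    with less have "a \<noteq> 0" by auto
    then show ?thesis by (intro exI[of _ "cmod a"]) (auto simp: p opE_const smul_norm)
  next
    case False
    then have "\<not> constant (poly p)" by (simp add: constant_degree)
    then obtain r where r: "poly p r = 0" using fundamental_theorem_of_algebra by blast
    then obtain q where pq: "p = [:-r,1:] * q" by (metis dvdE poly_eq_0_iff_dvd)
    have q0: "q \<noteq> 0" using less.prems pq by auto
    have dq: "degree q < degree p" using q0 unfolding pq by (subst degree_mult_eq) auto
    have qr: "\<And>\<zeta>. cmod \<zeta> = 1 \<Longrightarrow> poly q \<zeta> \<noteq> 0" using less.prems(2) pq by (auto simp: poly_mult)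
    have rn: "cmod r \<noteq> 1" using less.prems(2) r by blast
    obtain c where c: "c > 0" "\<forall>u. c * norm u \<le> norm (opE q u)" using less.hyps[OF dq q0 qr] by blast
    define d where "d = \<bar>1 - cmod r\<bar>"
    have d: "d > 0" using rn by (auto simp: d_def)
    have "d * c * norm u \<le> norm (opE p u)" for u
    proof -
      let ?w = "opE q u"
      have e: "opE p u = T ?w - smul r ?w" by (simp only: pq opE_mult opE_linfac)
      have "\<bar>norm (T ?w) - norm (smul r ?w)\<bar> \<le> norm (T ?w - smul r ?w)" by (rule norm_triangle_ineq3)
      moreover have "norm (T ?w) - norm (smul r ?w) = (1 - cmod r) * norm ?w"
        by (simp add: iso smul_norm algebra_simps)
      ultimately have "d * norm ?w \<le> norm (T ?w - smul r ?w)"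
        by (simp add: d_def abs_mult)
      moreover have "d * (c * norm u) \<le> d * norm ?w" using c d by (simp add: mult_left_mono)
      ultimately show ?thesis using e by (simp add: mult.assoc)
    qed
    then show ?thesis using c d by (intro exI[of _ "d * c"]) auto
  qed
qed

lemma no_jordan:
  assumes b: "T b = smul \<mu> b + a" and a: "T a = smul \<mu> a"
  shows "a = 0"
proof (rule ccontr)
  assume a0: "a \<noteq> 0"
  have "norm a = cmod \<mu> * norm a" using iso[of a] a by (simp add: smul_norm)
  then have mu: "cmod \<mu> = 1" using a0 by simp
  have iter: "(T^^Suc n) b = smul (\<mu>^Suc n) b + smul (of_nat (Suc n) * \<mu>^n) a" for n
  proof (induct n)
    case 0 then show ?case using b by simp
  next
    case (Suc n)
    have c1: "of_nat (Suc (Suc n)) * \<mu>^Suc n = \<mu>^Suc n + of_nat (Suc n) * \<mu>^Suc n"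
      by (simp add: algebra_simps)
    have c2: "smul (\<mu>^Suc n) a + smul (of_nat (Suc n) * \<mu>^Suc n) a = smul (of_nat (Suc (Suc n)) * \<mu>^Suc n) a"
      by (simp only: c1 V.scale_left_distrib)
    have "(T^^Suc (Suc n)) b = T ((T^^Suc n) b)" by simp
    also have "\<dots> = smul (\<mu>^Suc n) (smul \<mu> b + a) + smul (of_nat (Suc n) * \<mu>^n) (smul \<mu> a)"
      using Suc by (simp add: T_add T_smul b a)
    also have "\<dots> = smul (\<mu>^Suc (Suc n)) b + (smul (\<mu>^Suc n) a + smul (of_nat (Suc n) * \<mu>^Suc n) a)"
      by (simp add: V.scale_right_distrib mult_ac)
    also have "\<dots> = smul (\<mu>^Suc (Suc n)) b + smul (of_nat (Suc (Suc n)) * \<mu>^Suc n) a"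
      by (simp only: c2)
    finally show ?case .
  qed
  obtain m where m: "2 * norm b < real m * norm a"
    using a0 reals_Archimedean3[of "norm a"] by auto
  have n: "2 * norm b < real (Suc m) * norm a"
    by (rule less_le_trans[OF m]) (simp add: mult_right_mono)
  define n where "n = m"
  note n = n[folded n_def]
  have "real (Suc n) * norm a = norm (smul (of_nat (Suc n) * \<mu>^n) a)"
    by (simp only: smul_norm norm_mult norm_power mu norm_of_nat) simp
  also have "\<dots> = norm ((T^^Suc n) b - smul (\<mu>^Suc n) b)" by (simp only: iter add_diff_cancel_left')
  also have "\<dots> \<le> norm ((T^^Suc n) b) + norm (smul (\<mu>^Suc n) b)" by (rule norm_triangle_ineq4)
  also have "\<dots> = 2 * norm b" by (simp only: Tn_norm smul_norm norm_power mu) simp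
  finally show False using n by simp
qed

definition eigsum :: "'a \<Rightarrow> bool" where
  "eigsum u \<longleftrightarrow> (\<exists>\<Lambda> e. finite \<Lambda> \<and> u = (\<Sum>\<mu>\<in>\<Lambda>. e \<mu>) \<and> (\<forall>\<mu>\<in>\<Lambda>. T (e \<mu>) = smul \<mu> (e \<mu>)))"

lemma eigsum_0: "eigsum 0"
  unfolding eigsum_def by (intro exI[of _ "{}"]) auto

lemma eigsum_add:
  assumes "eigsum u" "T b = smul \<mu> b"
  shows "eigsum (u + b)"
proof -
  obtain \<Lambda> e where L: "finite \<Lambda>" "u = (\<Sum>\<mu>\<in>\<Lambda>. e \<mu>)" "\<forall>\<mu>\<in>\<Lambda>. T (e \<mu>) = smul \<mu> (e \<mu>)"
    using assms(1) unfolding eigsum_def by blast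
  define z where "z = (if \<mu> \<in> \<Lambda> then e \<mu> else 0)"
  define e' where "e' = e(\<mu> := z + b)"
  have z: "T z = smul \<mu> z" using L(3) by (auto simp: z_def)
  have s1: "(\<Sum>\<nu>\<in>\<Lambda>. e \<nu>) = z + (\<Sum>\<nu>\<in>\<Lambda>-{\<mu>}. e \<nu>)"
    using L(1) by (auto simp: z_def sum.remove)
  have s2: "(\<Sum>\<nu>\<in>insert \<mu> \<Lambda>. e' \<nu>) = e' \<mu> + (\<Sum>\<nu>\<in>\<Lambda>-{\<mu>}. e' \<nu>)"
    using L(1) by (simp add: sum.insert_remove)
  have s3: "(\<Sum>\<nu>\<in>\<Lambda>-{\<mu>}. e' \<nu>) = (\<Sum>\<nu>\<in>\<Lambda>-{\<mu>}. e \<nu>)"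
    by (rule sum.cong) (auto simp: e'_def)
  have "u + b = (\<Sum>\<nu>\<in>insert \<mu> \<Lambda>. e' \<nu>)"
    using L(2) s1 s2 s3 by (simp add: e'_def algebra_simps)
  moreover have "\<forall>\<nu>\<in>insert \<mu> \<Lambda>. T (e' \<nu>) = smul \<nu> (e' \<nu>)"
    using L(3) z assms(2) by (auto simp: e'_def T_add V.scale_right_distrib)
  ultimately show ?thesis unfolding eigsum_def using L(1) by blast
qed

lemma algebraic_eigsum:
  fixes p :: "complex poly"
  assumes "p \<noteq> 0" "opE p u = 0"
  shows "eigsum u"
  using assms
proof (induct "degree p" arbitrary: p u rule: less_induct)
  case less
  show ?case
  proof (cases "degree p = 0")
    case True
    then obtain a where p: "p = [:a:]" by (metis degree_eq_zeroE)
    with less have "a \<noteq> 0" by auto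
    with less.prems have "u = 0" by (simp add: p opE_const)
    then show ?thesis by (simp add: eigsum_0)
  next
    case False
    then have "\<not> constant (poly p)" by (simp add: constant_degree)
    then obtain r where r: "poly p r = 0" using fundamental_theorem_of_algebra by blast
    then obtain q where pq: "p = [:-r,1:] * q" by (metis dvdE poly_eq_0_iff_dvd)
    have q0: "q \<noteq> 0" using less.prems pq by auto
    have dq: "degree q < degree p" using q0 unfolding pq by (subst degree_mult_eq) auto
    define a where "a = opE q u"
    have Ta: "T a = smul r a"
      using less.prems(2) unfolding pq opE_mult opE_linfac a_def by simp
    show ?thesis
    proof (cases "poly q r = 0")
      case False
      define \<beta> where "\<beta> = poly q r"
      define u' where "u' = u - smul (inverse \<beta>) a"
      have "opE q u' = a - smul (inverse \<beta>) (smul \<beta> a)"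
        by (simp add: u'_def opE_udiff opE_usmul opE_eigen[OF Ta] a_def[symmetric] \<beta>_def)
      also have "\<dots> = 0" using False by (simp add: \<beta>_def)
      finally have "eigsum u'" using less.hyps[OF dq q0] by blast
      moreover have "T (smul (inverse \<beta>) a) = smul r (smul (inverse \<beta>) a)"
        by (simp add: T_smul Ta mult.commute)
      ultimately have "eigsum (u' + smul (inverse \<beta>) a)" by (rule eigsum_add)
      then show ?thesis by (simp add: u'_def)
    next
      case True
      then obtain q2 where qq: "q = [:-r,1:] * q2" by (metis dvdE poly_eq_0_iff_dvd)
      define b where "b = opE q2 u"
      have "a = T b - smul r b" unfolding a_def b_def qq opE_mult opE_linfac by simp
      then have "T b = smul r b + a" by simp
      then have "a = 0" using no_jordan Ta by blast
      then have "opE q u = 0" using a_def by simp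
      then show ?thesis by (rule less.hyps[OF dq q0])
    qed
  qed
qed

lemma eigsum_nf:
  assumes "eigsum u"
  shows "\<exists>\<Lambda> e. finite \<Lambda> \<and> u = (\<Sum>\<mu>\<in>\<Lambda>. e \<mu>) \<and> (\<forall>\<mu>\<in>\<Lambda>. T (e \<mu>) = smul \<mu> (e \<mu>) \<and> e \<mu> \<noteq> 0)
     \<and> (\<forall>\<mu>. \<mu> \<notin> \<Lambda> \<longrightarrow> e \<mu> = 0)"
proof -
  obtain \<Lambda> e where L: "finite \<Lambda>" "u = (\<Sum>\<mu>\<in>\<Lambda>. e \<mu>)" "\<forall>\<mu>\<in>\<Lambda>. T (e \<mu>) = smul \<mu> (e \<mu>)"
    using assms unfolding eigsum_def by blast
  define \<Lambda>' where "\<Lambda>' = {\<mu>\<in>\<Lambda>. e \<mu> \<noteq> 0}"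
  define e' where "e' \<mu> = (if \<mu> \<in> \<Lambda>' then e \<mu> else 0)" for \<mu>
  have "(\<Sum>\<mu>\<in>\<Lambda>. e \<mu>) = (\<Sum>\<mu>\<in>\<Lambda>'. e \<mu>)"
    by (rule sum.mono_neutral_right) (use L(1) in \<open>auto simp: \<Lambda>'_def\<close>)
  also have "\<dots> = (\<Sum>\<mu>\<in>\<Lambda>'. e' \<mu>)" by (rule sum.cong) (auto simp: e'_def)
  finally show ?thesis using L by (intro exI[of _ \<Lambda>'] exI[of _ e']) (auto simp: \<Lambda>'_def e'_def)
qed

lemma eig_unimodular: "T c = smul \<mu> c \<Longrightarrow> c \<noteq> 0 \<Longrightarrow> cmod \<mu> = 1"
  using iso[of c] by (simp add: smul_norm)

lemma lagrange:
  assumes "finite \<Lambda>" "\<forall>\<nu>\<in>\<Lambda>. T (e \<nu>) = smul \<nu> (e \<nu>)" "\<mu> \<in> \<Lambda>"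
  shows "\<exists>q. opE q (\<Sum>\<nu>\<in>\<Lambda>. e \<nu>) = e \<mu>"
proof -
  define P where "P = (\<Prod>\<nu>\<in>\<Lambda>-{\<mu>}. (\<mu> - \<nu>))"
  define q where "q = smult (inverse P) (\<Prod>\<nu>\<in>\<Lambda>-{\<mu>}. [:-\<nu>,1:])"
  have pq: "poly q x = inverse P * (\<Prod>\<nu>\<in>\<Lambda>-{\<mu>}. (x - \<nu>))" for x
    by (simp add: q_def poly_prod)
  have P0: "P \<noteq> 0" using assms(1) by (simp add: P_def)
  have "opE q (\<Sum>\<nu>\<in>\<Lambda>. e \<nu>) = (\<Sum>\<nu>\<in>\<Lambda>. smul (poly q \<nu>) (e \<nu>))"
    using assms(2) by (auto intro!: sum.cong simp: opE_usum opE_eigen)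
  also have "\<dots> = smul (poly q \<mu>) (e \<mu>) + (\<Sum>\<nu>\<in>\<Lambda>-{\<mu>}. smul (poly q \<nu>) (e \<nu>))"
    using assms(1,3) by (simp add: sum.remove)
  also have "(\<Sum>\<nu>\<in>\<Lambda>-{\<mu>}. smul (poly q \<nu>) (e \<nu>)) = 0"
    by (rule sum.neutral) (use assms(1) in \<open>auto simp: pq\<close>)
  also have "poly q \<mu> = 1" using P0 by (simp add: pq P_def)
  finally show ?thesis by auto
qed

lemma unit_sq:
  fixes a :: complex
  assumes "cmod a = 1" "cmod (a - 1) < 1/2"
  shows "3/2 * cmod (a - 1) \<le> cmod (a^2 - 1)"
proof -
  have re: "Re a ^ 2 + Im a ^ 2 = 1" using assms(1) by (metis cmod_power2 power_one)
  have h1: "cmod (a + 1) ^ 2 = (Re a + 1)^2 + Im a ^ 2" by (simp add: cmod_power2)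
  have h2: "cmod (a - 1) ^ 2 = (Re a - 1)^2 + Im a ^ 2" by (simp add: cmod_power2)
  have "cmod (a + 1) ^ 2 + cmod (a - 1) ^ 2 = 4"
    using re unfolding h1 h2 by (simp add: power2_sum power2_diff)
  moreover have "cmod (a - 1) ^ 2 \<le> (1/2)^2"
    by (rule power_mono) (use assms(2) in auto)
  ultimately have "(3/2)^2 \<le> cmod (a + 1) ^ 2" unfolding power2_eq_square by linarith
  then have "3/2 \<le> cmod (a + 1)" by (rule power2_le_imp_le) simp
  then have "cmod (a - 1) * (3/2) \<le> cmod (a - 1) * cmod (a + 1)" by (rule mult_left_mono) auto
  moreover have "a^2 - 1 = (a - 1) * (a + 1)" by (simp add: power2_eq_square algebra_simps)
  ultimately show ?thesis by (simp add: norm_mult mult.commute)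
qed

end


context hset
begin

lemma unit_pow2:
  fixes a :: complex
  assumes "cmod a = 1" "\<forall>i\<le>j. cmod (a^(2^i) - 1) < 1/2"
  shows "(3/2)^j * cmod (a - 1) \<le> cmod (a^(2^j) - 1)"
  using assms
proof (induct j)
  case 0 then show ?case by simp
next
  case (Suc j)
  have ih: "(3/2)^j * cmod (a - 1) \<le> cmod (a^(2^j) - 1)" using Suc by auto
  have b1: "cmod (a^(2^j)) = 1" using Suc.prems by (simp add: norm_power)
  have "cmod (a^(2^j) - 1) < 1/2" using Suc.prems(2) by auto
  then have st: "3/2 * cmod (a^(2^j) - 1) \<le> cmod ((a^(2^j))^2 - 1)" by (rule unit_sq[OF b1])
  have e2: "(2::nat)^Suc j = 2^j * 2" by simp
  have eq: "(a^(2^j))^2 = a^(2^Suc j)" by (simp only: e2 power_mult)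
  have "(3/2)^Suc j * cmod (a - 1) = 3/2 * ((3/2)^j * cmod (a - 1))" by simp
  also have "\<dots> \<le> 3/2 * cmod (a^(2^j) - 1)" using ih by (intro mult_left_mono) auto
  also have "\<dots> \<le> cmod (a^(2^Suc j) - 1)" using st eq by simp
  finally show ?case .
qed

lemma UC:
  fixes \<alpha> :: "nat \<Rightarrow> complex"
  assumes "\<And>n. cmod (\<alpha> n) = 1" "\<And>k. eventually (\<lambda>n. cmod (\<alpha> n ^ k - 1) < 1/2) sequentially"
  shows "\<alpha> \<longlonglongrightarrow> 1"
proof (rule tendstoI)
  fix e :: real assume e: "0 < e"
  obtain j where j: "1/(2*e) < (3/2::real)^j" using real_arch_pow[of "3/2::real" "1/(2*e)"] by auto
  define P where "P = (3/2::real)^j"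
  have P0: "P > 0" by (simp add: P_def)
  have "eventually (\<lambda>n. \<forall>i\<in>{..j}. cmod (\<alpha> n ^ (2^i) - 1) < 1/2) sequentially"
    by (rule eventually_ball_finite) (simp, intro ballI assms(2))
  then show "eventually (\<lambda>n. dist (\<alpha> n) 1 < e) sequentially"
  proof (rule eventually_mono)
    fix n assume h: "\<forall>i\<in>{..j}. cmod (\<alpha> n ^ (2^i) - 1) < 1/2"
    then have "P * cmod (\<alpha> n - 1) \<le> cmod (\<alpha> n ^ (2^j) - 1)"
      using unit_pow2[of "\<alpha> n" j] assms(1) by (auto simp: P_def)
    also have "\<dots> < 1/2" using h by auto
    finally have a: "cmod (\<alpha> n - 1) * P < 1/2" by (simp add: mult.commute)
    have "1 < e * P * 2" using j e by (simp add: P_def field_simps)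
    then have "cmod (\<alpha> n - 1) * P < e * P" using a by linarith
    then have "cmod (\<alpha> n - 1) < e" using P0 by simp
    then show "dist (\<alpha> n) 1 < e" by (simp add: dist_norm)
  qed
qed

lemma L_iff: "x \<in> L_set T \<omega> \<longleftrightarrow> (\<lambda>n. (T^^\<omega> n) x) \<longlonglongrightarrow> x"
  by (simp add: L_set_def)

lemma Tn_dist: "norm ((T^^k) x - (T^^k) y) = norm (x - y)"
  by (simp only: Tn_diff[symmetric] Tn_norm)

lemma L_closed: "closed (L_set T \<omega>)"
proof -
  have "closure (L_set T \<omega>) \<subseteq> L_set T \<omega>"
  proof
    fix x assume x: "x \<in> closure (L_set T \<omega>)"
    show "x \<in> L_set T \<omega>" unfolding L_iff
    proof (rule tendstoI)
      fix e :: real assume e: "0 < e"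
      have e3: "e/3 > 0" using e by simp
      obtain y where y: "y \<in> L_set T \<omega>" "dist y x < e/3"
        using x e3 unfolding closure_approachable by blast
      have "(\<lambda>n. (T^^\<omega> n) y) \<longlonglongrightarrow> y" using y(1) by (simp add: L_iff)
      from tendstoD[OF this e3]
      have "eventually (\<lambda>n. dist ((T^^\<omega> n) y) y < e/3) sequentially" .
      then show "eventually (\<lambda>n. dist ((T^^\<omega> n) x) x < e) sequentially"
      proof (rule eventually_mono)
        fix n assume h: "dist ((T^^\<omega> n) y) y < e/3"
        have t1: "dist ((T^^\<omega> n) x) x \<le> dist ((T^^\<omega> n) x) ((T^^\<omega> n) y) + dist ((T^^\<omega> n) y) x"
          by (rule dist_triangle)
        have t2: "dist ((T^^\<omega> n) y) x \<le> dist ((T^^\<omega> n) y) y + dist y x"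
          by (rule dist_triangle)
        have "dist ((T^^\<omega> n) x) x \<le> dist ((T^^\<omega> n) x) ((T^^\<omega> n) y) + dist ((T^^\<omega> n) y) y + dist y x"
          using t1 t2 by linarith
        also have "dist ((T^^\<omega> n) x) ((T^^\<omega> n) y) = dist y x"
          by (simp add: dist_norm Tn_dist norm_minus_commute)
        finally show "dist ((T^^\<omega> n) x) x < e" using h y(2) by linarith
      qed
    qed
  qed
  then show ?thesis by (simp add: closure_subset_eq)
qed

lemma L_zero: "0 \<in> L_set T \<omega>"
  by (simp add: L_iff Tn_0)

lemma L_norm_iff: "x \<in> L_set T \<omega> \<longleftrightarrow> (\<lambda>n. norm ((T^^\<omega> n) x - x)) \<longlonglongrightarrow> 0"
  by (simp add: L_iff tendsto_norm_zero_iff LIM_zero_iff)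

lemma null_comp:
  fixes f g :: "nat \<Rightarrow> real"
  assumes "\<And>n. 0 \<le> f n" "\<And>n. f n \<le> g n" "g \<longlonglongrightarrow> 0"
  shows "f \<longlonglongrightarrow> 0"
proof (rule Lim_null_comparison[OF _ assms(3)])
  show "eventually (\<lambda>n. norm (f n) \<le> g n) sequentially"
    using assms(1,2) by (intro always_eventually allI) simp
qed

lemma L_opE: assumes "x \<in> L_set T \<omega>" shows "opE p x \<in> L_set T \<omega>"
proof -
  define B where "B = (\<Sum>k\<le>degree p. cmod (coeff p k))"
  have lim: "(\<lambda>n. B * norm ((T^^\<omega> n) x - x)) \<longlonglongrightarrow> 0"
    using assms unfolding L_norm_iff by (rule tendsto_mult_right_zero)
  have le: "norm ((T^^\<omega> n) (opE p x) - opE p x) \<le> B * norm ((T^^\<omega> n) x - x)" for n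
  proof -
    have "(T^^\<omega> n) (opE p x) - opE p x = opE p ((T^^\<omega> n) x - x)"
      by (simp only: opE_udiff opE_Tn)
    then show ?thesis using opE_bound[of p "(T^^\<omega> n) x - x"] by (simp only: B_def)
  qed
  show ?thesis unfolding L_norm_iff
    by (rule null_comp[where f="\<lambda>n. norm ((T^^\<omega> n) (opE p x) - opE p x)" and g="\<lambda>n. B * norm ((T^^\<omega> n) x - x)", OF _ le lim]) simp
qed

lemma L_mult: assumes "x \<in> L_set T \<omega>" shows "(\<lambda>n. (T^^(k * \<omega> n)) x) \<longlonglongrightarrow> x"
proof (induct k)
  case 0 then show ?case by simp
next
  case (Suc k)
  have a: "(\<lambda>n. norm ((T^^\<omega> n) x - x)) \<longlonglongrightarrow> 0" using assms by (simp add: L_norm_iff)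
  have b: "(\<lambda>n. norm ((T^^(k * \<omega> n)) x - x)) \<longlonglongrightarrow> 0"
    using Suc by (simp add: tendsto_norm_zero_iff LIM_zero_iff)
  have le: "norm ((T^^(Suc k * \<omega> n)) x - x) \<le> norm ((T^^(k * \<omega> n)) x - x) + norm ((T^^\<omega> n) x - x)" for n
  proof -
    have "(T^^(Suc k * \<omega> n)) x = (T^^\<omega> n) ((T^^(k * \<omega> n)) x)" by (simp add: funpow_add)
    then have "(T^^(Suc k * \<omega> n)) x - x = ((T^^\<omega> n) ((T^^(k * \<omega> n)) x) - (T^^\<omega> n) x) + ((T^^\<omega> n) x - x)"
      by simp
    then have "norm ((T^^(Suc k * \<omega> n)) x - x) \<le> norm ((T^^\<omega> n) ((T^^(k * \<omega> n)) x) - (T^^\<omega> n) x) + norm ((T^^\<omega> n) x - x)"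
      by (simp only: norm_triangle_ineq)
    then show ?thesis by (simp only: Tn_dist)
  qed
  have "(\<lambda>n. norm ((T^^(Suc k * \<omega> n)) x - x)) \<longlonglongrightarrow> 0"
    by (rule null_comp[where f="\<lambda>n. norm ((T^^(Suc k * \<omega> n)) x - x)" and g="\<lambda>n. norm ((T^^(k * \<omega> n)) x - x) + norm ((T^^\<omega> n) x - x)", OF _ le tendsto_add_zero[OF b a]]) simp
  then show ?case by (simp add: tendsto_norm_zero_iff LIM_zero_iff)
qed

lemma eig_lim:
  assumes "e \<noteq> 0" "T e = smul \<mu> e" "e \<in> L_set T \<omega>"
  shows "(\<lambda>n. \<mu>^(\<omega> n)) \<longlonglongrightarrow> 1"
proof -
  have h: "norm ((T^^k) e - e) = cmod (\<mu>^k - 1) * norm e" for k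
    using smul_diff_norm[of "\<mu>^k" e 1] by (simp add: Tn_eigen[OF assms(2)])
  have "(\<lambda>n. norm ((T^^\<omega> n) e - e) / norm e) \<longlonglongrightarrow> 0"
    using assms(3) unfolding L_norm_iff by (rule tendsto_divide_zero)
  then have "(\<lambda>n. cmod (\<mu>^(\<omega> n) - 1)) \<longlonglongrightarrow> 0" using assms(1) by (simp add: h)
  then show ?thesis by (simp add: tendsto_norm_zero_iff LIM_zero_iff)
qed

lemma eigsum_L:
  assumes "finite \<Lambda>" "\<forall>\<mu>\<in>\<Lambda>. T (e \<mu>) = smul \<mu> (e \<mu>)" "\<forall>\<mu>\<in>\<Lambda>. (\<lambda>n. \<mu>^(\<omega> n)) \<longlonglongrightarrow> 1"
  shows "(\<Sum>\<mu>\<in>\<Lambda>. e \<mu>) \<in> L_set T \<omega>"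
proof -
  have lim: "(\<lambda>n. (\<Sum>\<mu>\<in>\<Lambda>. smul (\<mu>^(\<omega> n)) (e \<mu>))) \<longlonglongrightarrow> (\<Sum>\<mu>\<in>\<Lambda>. smul 1 (e \<mu>))"
  proof (rule tendsto_sum)
    fix \<mu> assume "\<mu> \<in> \<Lambda>"
    then have "(\<lambda>n. \<mu>^(\<omega> n)) \<longlonglongrightarrow> 1" using assms(3) by blast
    then show "(\<lambda>n. smul (\<mu>^(\<omega> n)) (e \<mu>)) \<longlonglongrightarrow> smul 1 (e \<mu>)" by (rule smul_tendsto)
  qed
  have eq: "(T^^k) (\<Sum>\<mu>\<in>\<Lambda>. e \<mu>) = (\<Sum>\<mu>\<in>\<Lambda>. smul (\<mu>^k) (e \<mu>))" for k
    unfolding Tn_sum by (rule sum.cong[OF refl]) (use assms(2) Tn_eigen in blast)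
  show ?thesis unfolding L_iff eq using lim by (simp only: V.scale_one)
qed

end


context hset
begin

lemma Rec_UNIV: assumes "x0 \<in> Hr T" "x0 \<noteq> 0" shows "Rec T = UNIV"
proof -
  from assms(1) have "x0 \<in> Rec T" by (simp add: Hr_def)
  then obtain \<omega> where w: "strict_mono \<omega>" "\<forall>n. 0 < \<omega> n" "x0 \<in> L_set T \<omega>" by (auto simp: Rec_def)
  then have "\<omega> \<in> C_set T" using assms(2) by (auto simp: C_set_def)
  then have "closure (L_set T \<omega>) = UNIV" using assms(1) w(3) by (auto simp: Hr_def)
  then have "L_set T \<omega> = UNIV" using L_closed by simp
  then show ?thesis using w by (auto simp: Rec_def)
qed

lemma HrI:
  assumes "x0 \<in> Hr T" "Rec T = UNIV"
    "\<And>\<omega>. strict_mono \<omega> \<Longrightarrow> (\<forall>n. 0 < \<omega> n) \<Longrightarrow> u \<in> L_set T \<omega> \<Longrightarrow> x0 \<in> L_set T \<omega>"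
  shows "u \<in> Hr T"
proof -
  have "closure (L_set T \<omega>) = UNIV" if "\<omega> \<in> C_set T" "u \<in> L_set T \<omega>" for \<omega>
  proof -
    have "x0 \<in> L_set T \<omega>" using that assms(3) by (auto simp: C_set_def)
    then show ?thesis using assms(1) that(1) by (auto simp: Hr_def)
  qed
  then show ?thesis using assms(2) by (auto simp: Hr_def)
qed

lemma Hr_opE:
  assumes "z \<in> Hr T" "Rec T = UNIV" "c > 0" "\<And>v. c * norm v \<le> norm (opE p v)"
  shows "opE p z \<in> Hr T"
proof -
  have "z \<in> L_set T \<omega>" if "opE p z \<in> L_set T \<omega>" for \<omega>
  proof -
    have lim: "(\<lambda>n. (1/c) * norm ((T^^\<omega> n) (opE p z) - opE p z)) \<longlonglongrightarrow> 0"
      using that unfolding L_norm_iff by (rule tendsto_mult_right_zero)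
    have le: "norm ((T^^\<omega> n) z - z) \<le> (1/c) * norm ((T^^\<omega> n) (opE p z) - opE p z)" for n
    proof -
      have "(T^^\<omega> n) (opE p z) - opE p z = opE p ((T^^\<omega> n) z - z)" by (simp only: opE_udiff opE_Tn)
      then show ?thesis using assms(3) assms(4)[of "(T^^\<omega> n) z - z"] by (simp add: field_simps)
    qed
    show ?thesis unfolding L_norm_iff
      by (rule null_comp[where f="\<lambda>n. norm ((T^^\<omega> n) z - z)" and g="\<lambda>n. (1/c) * norm ((T^^\<omega> n) (opE p z) - opE p z)", OF _ le lim]) simp
  qed
  then have "closure (L_set T \<omega>) = UNIV" if "\<omega> \<in> C_set T" "opE p z \<in> L_set T \<omega>" for \<omega>
    using assms(1) that by (auto simp: Hr_def)
  then show ?thesis using assms(2) by (auto simp: Hr_def)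
qed

definition sc :: "real \<Rightarrow> complex poly \<Rightarrow> complex poly" where
  "sc s p = (\<Sum>k\<le>degree p. monom (coeff p k * of_real s ^ k) k)"

lemma poly_sc: "poly (sc s p) x = poly p (of_real s * x)"
  unfolding sc_def poly_sum poly_monom poly_altdef[of p "of_real s * x"]
  by (simp add: power_mult_distrib mult_ac)

lemma opE_psum: "opE (\<Sum>i\<in>A. f i) u = (\<Sum>i\<in>A. opE (f i) u)"
  by (induct A rule: infinite_finite_induct) (auto simp: opE_add)

lemma opE_sc: "opE (sc s p) u = (\<Sum>k\<le>degree p. smul (coeff p k * of_real s ^ k) ((T^^k) u))"
  by (simp add: sc_def opE_psum opE_monom)

lemma sc_nz: assumes "s \<noteq> 0" "p \<noteq> 0" shows "sc s p \<noteq> 0"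
proof -
  have "coeff (sc s p) (degree p) = coeff p (degree p) * of_real s ^ degree p"
    unfolding sc_def by (rule coeff_sum_monom) simp
  then show ?thesis using assms by auto
qed

lemma opE_diff: "opE (p - q) u = opE p u - opE q u"
proof -
  have "opE p u = opE (p - q) u + opE q u" by (metis opE_add diff_add_cancel)
  then show ?thesis by simp
qed

lemma avoid_finite:
  fixes F :: "real set"
  assumes "finite F" "d > 0"
  shows "\<exists>s. a < s \<and> s < a + d \<and> s \<notin> F"
proof (rule ccontr)
  assume nt: "\<not> ?thesis"
  define f where "f k = a + d / (real k + 2)" for k :: nat
  have "f k \<in> F" for k
  proof -
    have "d / (real k + 2) < d" using assms(2) by (simp add: divide_less_eq)
    moreover have "0 < d / (real k + 2)" using assms(2) by simp
    ultimately show ?thesis using nt by (auto simp: f_def)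
  qed
  then have "range f \<subseteq> F" by auto
  then have "finite (range f)" using assms(1) finite_subset by blast
  moreover have "inj f" unfolding inj_def f_def using assms(2) by (auto simp: field_simps)
  ultimately show False using finite_imageD by fastforce
qed

lemma avoid_finite_c:
  fixes F :: "complex set"
  assumes "finite F" "r > 0"
  shows "\<exists>\<epsilon>. cmod \<epsilon> < r \<and> \<epsilon> \<notin> F"
proof -
  have "finite (complex_of_real -` F)" using assms(1) by (rule finite_vimageI) (simp add: inj_def)
  then obtain s where "0 < s" "s < 0 + r" "s \<notin> complex_of_real -` F"
    using avoid_finite assms(2) by blast
  then show ?thesis by (intro exI[of _ "complex_of_real s"]) auto
qed

lemma caseA_closure:
  assumes "z \<in> Hr T" "Rec T = UNIV"
  shows "opE p z \<in> closure (Hr T)"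
proof (cases "p = 0")
  case True
  define x where "x n = opE [:complex_of_real (inverse (real (Suc n))):] z" for n
  have "x n \<in> Hr T" for n
  proof -
    define a where "a = complex_of_real (inverse (real (Suc n)))"
    have "a \<noteq> 0" unfolding a_def of_real_eq_0_iff by simp
    then have "cmod a > 0" by simp
    then show ?thesis unfolding x_def a_def[symmetric]
      by (rule Hr_opE[OF assms]) (simp add: opE_const smul_norm)
  qed
  moreover have "x \<longlonglongrightarrow> 0"
  proof -
    have "(\<lambda>n. complex_of_real (inverse (real (Suc n)))) \<longlonglongrightarrow> complex_of_real 0"
      by (rule tendsto_of_real[OF LIMSEQ_inverse_real_of_nat])
    then have "(\<lambda>n. smul (complex_of_real (inverse (real (Suc n)))) z) \<longlonglongrightarrow> smul (complex_of_real 0) z"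
      by (rule smul_tendsto)
    moreover have "x = (\<lambda>n. smul (complex_of_real (inverse (real (Suc n)))) z)"
      by (rule ext) (simp only: x_def opE_const)
    ultimately show ?thesis by simp
  qed
  ultimately show ?thesis using True by (auto simp: closure_sequential)
next
  case False
  define Rm where "Rm = cmod ` {r. poly p r = 0}"
  have fRm: "finite Rm" using False by (simp add: Rm_def poly_roots_finite)
  have "\<forall>n. \<exists>s. 1 < s \<and> s < 1 + inverse (real (Suc n)) \<and> s \<notin> Rm"
    using avoid_finite[OF fRm] by simp
  from choice[OF this] obtain S where S: "\<forall>n. 1 < S n \<and> S n < 1 + inverse (real (Suc n)) \<and> S n \<notin> Rm"
    by blast
  have Slim: "S \<longlonglongrightarrow> 1"
  proof -
    have Sn: "1 < S n" "S n < 1 + inverse (real (Suc n))" for n using S by auto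
    have le1: "norm (S n - 1) \<le> inverse (real (Suc n))" for n
      using Sn[of n] by (simp add: real_norm_def)
    have "(\<lambda>n. norm (S n - 1)) \<longlonglongrightarrow> 0"
      by (rule null_comp[where f="\<lambda>n. norm (S n - 1)" and g="\<lambda>n. inverse (real (Suc n))", OF _ le1 LIMSEQ_inverse_real_of_nat]) simp
    then show ?thesis by (rule LIM_zero_cancel[OF tendsto_norm_zero_cancel])
  qed
  define x where "x n = opE (sc (S n) p) z" for n
  have "x n \<in> Hr T" for n
  proof -
    have s1: "1 < S n" using S by blast
    have s0: "S n \<noteq> 0" "S n > 0" using s1 by auto
    have "poly (sc (S n) p) \<zeta> \<noteq> 0" if "cmod \<zeta> = 1" for \<zeta>
    proof
      assume "poly (sc (S n) p) \<zeta> = 0"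
      then have "poly p (of_real (S n) * \<zeta>) = 0" by (simp add: poly_sc)
      then have "cmod (of_real (S n) * \<zeta>) \<in> Rm" by (auto simp: Rm_def)
      moreover have "cmod (of_real (S n) * \<zeta>) = S n" using that s0 by (simp add: norm_mult)
      ultimately show False using S by auto
    qed
    then obtain c where "c > 0" "\<forall>u. c * norm u \<le> norm (opE (sc (S n) p) u)"
      using opE_bounded_below[OF sc_nz[OF s0(1) False]] by blast
    then show ?thesis unfolding x_def by (intro Hr_opE[OF assms]) auto
  qed
  moreover have "x \<longlonglongrightarrow> opE p z"
  proof -
    have "(\<lambda>n. \<Sum>k\<le>degree p. smul (coeff p k * of_real (S n) ^ k) ((T^^k) z))
          \<longlonglongrightarrow> (\<Sum>k\<le>degree p. smul (coeff p k * of_real 1 ^ k) ((T^^k) z))"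
    proof (rule tendsto_sum)
      fix k
      have "(\<lambda>n. coeff p k * of_real (S n) ^ k) \<longlonglongrightarrow> coeff p k * of_real 1 ^ k"
        by (intro tendsto_mult tendsto_const tendsto_power tendsto_of_real Slim)
      then show "(\<lambda>n. smul (coeff p k * of_real (S n) ^ k) ((T^^k) z)) \<longlonglongrightarrow> smul (coeff p k * of_real 1 ^ k) ((T^^k) z)"
        by (rule smul_tendsto)
    qed
    moreover have "x = (\<lambda>n. \<Sum>k\<le>degree p. smul (coeff p k * of_real (S n) ^ k) ((T^^k) z))"
      by (rule ext) (simp only: x_def opE_sc)
    ultimately show ?thesis by (simp add: opE_def)
  qed
  ultimately show ?thesis by (auto simp: closure_sequential)
qed

lemma caseA_M:
  assumes "z \<in> Hr T" "Rec T = UNIV" "\<forall>p. p \<noteq> 0 \<longrightarrow> opE p z \<noteq> 0"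
  defines "M \<equiv> range (\<lambda>p. opE p z)"
  shows "inf_dim_subspace smul M \<and> T ` M \<subseteq> M \<and> M \<subseteq> closure (Hr T)"
proof (intro conjI)
  show "M \<subseteq> closure (Hr T)" unfolding M_def using caseA_closure[OF assms(1,2)] by auto
  show "T ` M \<subseteq> M"
  proof
    fix v assume "v \<in> T ` M"
    then obtain p where "v = T (opE p z)" by (auto simp: M_def)
    then have "v = opE (pCons 0 p) z" by (simp add: opE_pCons)
    then show "v \<in> M" by (simp add: M_def)
  qed
  have sub: "V.subspace M"
  proof (rule V.subspaceI)
    show "0 \<in> M" unfolding M_def by (metis opE_0 rangeI)
    show "x + y \<in> M" if "x \<in> M" "y \<in> M" for x y
      using that unfolding M_def by (auto simp: opE_add[symmetric])
    show "smul c x \<in> M" if "x \<in> M" for c x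
      using that unfolding M_def by (auto simp: opE_smult[symmetric])
  qed
  have Tk: "(T^^k) z = opE (monom 1 k) z" for k by (simp add: opE_monom)
  have inj: "inj_on (\<lambda>k. (T^^k) z) A" for A
  proof (rule inj_onI)
    fix i j assume "i \<in> A" "j \<in> A" "(T^^i) z = (T^^j) z"
    then have "opE (monom 1 i - monom 1 j) z = 0" by (simp add: opE_diff opE_monom)
    then have "monom (1::complex) i - monom 1 j = 0" using assms(3) by blast
    then have "coeff (monom (1::complex) i - monom 1 j) i = 0" by simp
    then show "i = j" by (auto split: if_splits)
  qed
  have nfin: "\<not> (\<exists>B. finite B \<and> V.span B = M)"
  proof
    assume "\<exists>B. finite B \<and> V.span B = M"
    then obtain B where B: "finite B" "V.span B = M" by blast
    define N where "N = card B"
    define S where "S = (\<lambda>k. (T^^k) z) ` {..N}"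
    have fS: "finite S" by (simp add: S_def)
    have cS: "card S = Suc N" unfolding S_def by (simp add: card_image[OF inj])
    have SB: "S \<subseteq> V.span B" unfolding B(2) S_def M_def using Tk by auto
    show False
    proof (cases "V.independent S")
      case True
      from V.independent_span_bound[OF B(1) True SB] have "card S \<le> card B" by simp
      then show False using cS N_def by simp
    next
      case False
      then obtain t u v where tuv: "finite t" "t \<subseteq> S" "(\<Sum>v\<in>t. smul (u v) v) = 0" "v \<in> t" "u v \<noteq> 0"
        unfolding V.independent_explicit_module by blast
      define c where "c v = (if v \<in> t then u v else 0)" for v
      have "(\<Sum>v\<in>S. smul (c v) v) = (\<Sum>v\<in>t. smul (c v) v)"
        by (rule sum.mono_neutral_right[OF fS tuv(2)]) (auto simp: c_def)
      also have "\<dots> = (\<Sum>v\<in>t. smul (u v) v)" by (rule sum.cong) (auto simp: c_def)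
      finally have c: "(\<Sum>v\<in>S. smul (c v) v) = 0" "\<exists>v\<in>S. c v \<noteq> 0"
        using tuv by (auto simp: c_def)
      define p where "p = (\<Sum>k\<le>N. monom (c ((T^^k) z)) k)"
      have "opE p z = (\<Sum>k\<le>N. smul (c ((T^^k) z)) ((T^^k) z))"
        by (simp add: p_def opE_psum opE_monom)
      also have "\<dots> = (\<Sum>v\<in>S. smul (c v) v)"
        unfolding S_def by (simp add: sum.reindex[OF inj])
      finally have pz: "opE p z = 0" using c(1) by simp
      obtain k where k: "k \<le> N" "c ((T^^k) z) \<noteq> 0" using c(2) by (auto simp: S_def)
      have "coeff p k = c ((T^^k) z)" unfolding p_def by (rule coeff_sum_monom[OF k(1)])
      then have "p \<noteq> 0" using k(2) by auto
      then show False using pz assms(3) by blast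
    qed
  qed
  show "inf_dim_subspace smul M" unfolding inf_dim_subspace_def using sub nfin by blast
qed

end


context hset
begin

lemma TT:
  assumes fin: "finite \<Lambda>" and x0: "x0 = (\<Sum>\<mu>\<in>\<Lambda>. c \<mu>)"
    and eig: "\<forall>\<mu>\<in>\<Lambda>. T (c \<mu>) = smul \<mu> (c \<mu>) \<and> c \<mu> \<noteq> 0"
  shows "\<exists>\<delta>>0. \<forall>t y \<omega>. cmod t * norm y < \<delta> \<longrightarrow> x0 + smul t y \<in> L_set T \<omega> \<longrightarrow> x0 \<in> L_set T \<omega>"
proof -
  have "\<forall>\<mu>\<in>\<Lambda>. \<exists>q. opE q x0 = c \<mu>"
    using lagrange[OF fin] eig unfolding x0 by blast
  from bchoice[OF this] obtain Q where Q: "\<forall>\<mu>\<in>\<Lambda>. opE (Q \<mu>) x0 = c \<mu>" by blast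
  define B where "B \<mu> = (\<Sum>k\<le>degree (Q \<mu>). cmod (coeff (Q \<mu>) k)) + 1" for \<mu>
  have B1: "B \<mu> \<ge> 1" for \<mu> unfolding B_def by (simp add: sum_nonneg)
  have Bb: "norm (opE (Q \<mu>) v) \<le> B \<mu> * norm v" for \<mu> v
  proof -
    have "norm (opE (Q \<mu>) v) \<le> (B \<mu> - 1) * norm v" using opE_bound[of "Q \<mu>" v] by (simp add: B_def)
    also have "\<dots> \<le> B \<mu> * norm v" by (simp add: mult_right_mono)
    finally show ?thesis .
  qed
  define \<delta> where "\<delta> = (if \<Lambda> = {} then 1 else Min ((\<lambda>\<mu>. norm (c \<mu>) / (8 * B \<mu>)) ` \<Lambda>))"
  have pos: "norm (c \<mu>) / (8 * B \<mu>) > 0" if "\<mu> \<in> \<Lambda>" for \<mu>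
    using eig that B1[of \<mu>] by (auto intro!: divide_pos_pos)
  have d0: "\<delta> > 0" using fin pos by (auto simp: \<delta>_def)
  have dle: "\<delta> \<le> norm (c \<mu>) / (8 * B \<mu>)" if "\<mu> \<in> \<Lambda>" for \<mu>
    using fin that by (auto simp: \<delta>_def)
  have main: "x0 \<in> L_set T \<omega>" if small: "cmod t * norm y < \<delta>" and uL: "x0 + smul t y \<in> L_set T \<omega>" for t y \<omega>
  proof -
    define u where "u = x0 + smul t y"
    have lims: "(\<lambda>n. \<mu>^(\<omega> n)) \<longlonglongrightarrow> 1" if mu: "\<mu> \<in> \<Lambda>" for \<mu>
    proof (rule UC)
      have "cmod \<mu> = 1" using eig mu eig_unimodular by blast
      then show "cmod (\<mu>^(\<omega> n)) = 1" for n by (simp add: norm_power)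
      fix k
      define C where "C = norm (c \<mu>)"
      have C0: "C > 0" using eig mu by (simp add: C_def)
      have Bp: "B \<mu> > 0" using B1[of \<mu>] by simp
      have "(\<lambda>n. (T^^(k * \<omega> n)) u) \<longlonglongrightarrow> u" using uL unfolding u_def[symmetric] by (rule L_mult)
      then have "(\<lambda>n. norm ((T^^(k * \<omega> n)) u - u)) \<longlonglongrightarrow> 0"
        by (simp add: tendsto_norm_zero_iff LIM_zero_iff)
      moreover have "C / (4 * B \<mu>) > 0" using C0 Bp by simp
      ultimately have ev: "eventually (\<lambda>n. norm ((T^^(k * \<omega> n)) u - u) < C / (4 * B \<mu>)) sequentially"
        by (rule order_tendstoD(2))
      show "eventually (\<lambda>n. cmod ((\<mu>^(\<omega> n))^k - 1) < 1/2) sequentially"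
        using ev
      proof (rule eventually_mono)
        fix n assume h: "norm ((T^^(k * \<omega> n)) u - u) < C / (4 * B \<mu>)"
        define m where "m = k * \<omega> n"
        have pw: "(\<mu>^(\<omega> n))^k = \<mu>^m" by (simp only: m_def mult.commute[of k "\<omega> n"] power_mult)
        have e1: "cmod (\<mu>^m - 1) * C = norm ((T^^m) (c \<mu>) - c \<mu>)"
          using smul_diff_norm[of "\<mu>^m" "c \<mu>" 1] eig mu by (simp add: Tn_eigen C_def)
        have e2: "(T^^m) (c \<mu>) - c \<mu> = opE (Q \<mu>) ((T^^m) x0 - x0)"
          using Q mu by (simp add: opE_udiff opE_Tn)
        have e3: "(T^^m) x0 - x0 = ((T^^m) u - u) - smul t ((T^^m) y - y)"
          by (simp add: u_def Tn_add Tn_smul V.scale_right_diff_distrib algebra_simps)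
        have "norm ((T^^m) x0 - x0) \<le> norm ((T^^m) u - u) + norm (smul t ((T^^m) y - y))"
          unfolding e3 by (rule norm_triangle_ineq4)
        also have "norm (smul t ((T^^m) y - y)) \<le> cmod t * (2 * norm y)"
        proof -
          have "norm ((T^^m) y - y) \<le> norm ((T^^m) y) + norm y" by (rule norm_triangle_ineq4)
          then have "norm ((T^^m) y - y) \<le> 2 * norm y" by (simp add: Tn_norm)
          then show ?thesis by (simp add: smul_norm mult_left_mono)
        qed
        finally have f1: "norm ((T^^m) x0 - x0) \<le> norm ((T^^m) u - u) + cmod t * (2 * norm y)"
          by simp
        have "cmod (\<mu>^m - 1) * C \<le> B \<mu> * norm ((T^^m) x0 - x0)"
          unfolding e1 e2 by (rule Bb)
        also have "\<dots> \<le> B \<mu> * (norm ((T^^m) u - u) + cmod t * (2 * norm y))"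
          using f1 Bp by (simp add: mult_left_mono)
        also have "\<dots> = B \<mu> * norm ((T^^m) u - u) + 2 * B \<mu> * (cmod t * norm y)"
          by (simp add: algebra_simps)
        also have "\<dots> < C / 4 + C / 4"
        proof -
          have "B \<mu> * norm ((T^^m) u - u) < B \<mu> * (C / (4 * B \<mu>))"
            unfolding m_def by (rule mult_strict_left_mono[OF h Bp])
          also have "\<dots> = C / 4" using Bp by simp
          finally have a1: "B \<mu> * norm ((T^^m) u - u) < C / 4" .
          have "2 * B \<mu> * (cmod t * norm y) \<le> 2 * B \<mu> * \<delta>"
            using small Bp by (intro mult_left_mono) auto
          also have "\<dots> \<le> 2 * B \<mu> * (C / (8 * B \<mu>))"
            using dle[OF mu] Bp by (intro mult_left_mono) (auto simp: C_def)
          also have "\<dots> = C / 4" using Bp by simp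
          finally have a2: "2 * B \<mu> * (cmod t * norm y) \<le> C / 4" .
          show ?thesis using a1 a2 by linarith
        qed
        finally have "cmod (\<mu>^m - 1) * C < (1/2) * C" by simp
        then have "cmod (\<mu>^m - 1) < 1/2" using C0 by simp
        then show "cmod ((\<mu>^(\<omega> n))^k - 1) < 1/2" by (simp add: pw)
      qed
    qed
    have "(\<Sum>\<mu>\<in>\<Lambda>. c \<mu>) \<in> L_set T \<omega>"
      by (rule eigsum_L[OF fin]) (use eig lims in auto)
    then show ?thesis by (simp add: x0)
  qed
  show ?thesis using d0 main by blast
qed

lemma alg_transfer:
  assumes "opE m x0 = 0" "opE q (x0 + smul t y) = 0" "t \<noteq> 0"
  shows "opE (m * q) y = 0"
proof -
  have "opE (m * q) (x0 + smul t y) = 0" using assms(2) by (simp add: opE_mult opE_u0)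
  moreover have "opE (m * q) x0 = 0"
    using assms(1) by (simp add: mult.commute[of m q] opE_mult opE_u0)
  ultimately have "smul t (opE (m * q) y) = 0" by (simp add: opE_uadd opE_usmul)
  then show ?thesis using assms(3) by simp
qed

lemma subsingleton_finite: assumes "\<And>a b. a \<in> S \<Longrightarrow> b \<in> S \<Longrightarrow> a = b" shows "finite S"
proof (cases "S = {}")
  case False
  then obtain a where "a \<in> S" by blast
  then have "S \<subseteq> {a}" using assms by blast
  then show ?thesis using finite_subset by blast
qed simp

lemma density_B2:
  assumes x0H: "x0 \<in> Hr T" and RU: "Rec T = UNIV"
    and fin: "finite \<Lambda>" and x0: "x0 = (\<Sum>\<mu>\<in>\<Lambda>. c \<mu>)"
    and eig: "\<forall>\<mu>\<in>\<Lambda>. T (c \<mu>) = smul \<mu> (c \<mu>) \<and> c \<mu> \<noteq> 0"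
    and out: "\<forall>\<mu>. \<mu> \<notin> \<Lambda> \<longrightarrow> c \<mu> = 0"
    and w: "eigsum w"
  shows "w \<in> closure (Hr T)"
proof -
  obtain \<Lambda>' d where w': "finite \<Lambda>'" "w = (\<Sum>\<mu>\<in>\<Lambda>'. d \<mu>)"
    "\<forall>\<mu>\<in>\<Lambda>'. T (d \<mu>) = smul \<mu> (d \<mu>) \<and> d \<mu> \<noteq> 0" "\<forall>\<mu>. \<mu> \<notin> \<Lambda>' \<longrightarrow> d \<mu> = 0"
    using eigsum_nf[OF w] by blast
  define U where "U = \<Lambda> \<union> \<Lambda>'"
  have fU: "finite U" using fin w'(1) by (simp add: U_def)
  have x0U: "x0 = (\<Sum>\<mu>\<in>U. c \<mu>)"
    unfolding x0 by (rule sum.mono_neutral_left[OF fU]) (use out in \<open>auto simp: U_def\<close>)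
  have wU: "w = (\<Sum>\<mu>\<in>U. d \<mu>)"
    unfolding w'(2) by (rule sum.mono_neutral_left[OF fU]) (use w'(4) in \<open>auto simp: U_def\<close>)
  have ce: "T (c \<mu>) = smul \<mu> (c \<mu>)" for \<mu> using eig out by (cases "\<mu> \<in> \<Lambda>") auto
  have de: "T (d \<mu>) = smul \<mu> (d \<mu>)" for \<mu> using w'(3,4) by (cases "\<mu> \<in> \<Lambda>'") auto
  define uf where "uf \<epsilon> \<mu> = d \<mu> + smul \<epsilon> (c \<mu>)" for \<epsilon> \<mu>
  have ufe: "T (uf \<epsilon> \<mu>) = smul \<mu> (uf \<epsilon> \<mu>)" for \<epsilon> \<mu>
    by (simp add: uf_def T_add T_smul ce de V.scale_right_distrib V.scale_left_commute)
  have usum: "w + smul \<epsilon> x0 = (\<Sum>\<mu>\<in>U. uf \<epsilon> \<mu>)" for \<epsilon>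
    by (simp add: uf_def wU x0U sum.distrib V.scale_sum_right)
  define Bd where "Bd = (\<Union>\<mu>\<in>\<Lambda>. {\<epsilon>. d \<mu> + smul \<epsilon> (c \<mu>) = 0})"
  have fBd: "finite Bd"
    unfolding Bd_def
  proof (rule finite_UN_I[OF fin])
    fix \<mu> assume mu: "\<mu> \<in> \<Lambda>"
    show "finite {\<epsilon>. d \<mu> + smul \<epsilon> (c \<mu>) = 0}"
    proof (rule subsingleton_finite)
      fix a b assume "a \<in> {\<epsilon>. d \<mu> + smul \<epsilon> (c \<mu>) = 0}" "b \<in> {\<epsilon>. d \<mu> + smul \<epsilon> (c \<mu>) = 0}"
      then have "smul a (c \<mu>) = smul b (c \<mu>)" by (metis add_left_cancel mem_Collect_eq)
      then show "a = b" using eig mu by simp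
    qed
  qed
  have good: "w + smul \<epsilon> x0 \<in> Hr T" if eps: "\<epsilon> \<notin> Bd" for \<epsilon>
  proof (rule HrI[OF x0H RU])
    fix \<omega> assume uL: "w + smul \<epsilon> x0 \<in> L_set T \<omega>"
    have "(\<lambda>n. \<mu>^(\<omega> n)) \<longlonglongrightarrow> 1" if mu: "\<mu> \<in> \<Lambda>" for \<mu>
    proof -
      have nz: "uf \<epsilon> \<mu> \<noteq> 0" using eps mu by (auto simp: Bd_def uf_def)
      have "\<mu> \<in> U" using mu by (simp add: U_def)
      then obtain q where q: "opE q (\<Sum>\<nu>\<in>U. uf \<epsilon> \<nu>) = uf \<epsilon> \<mu>"
        using lagrange[OF fU, of "uf \<epsilon>"] ufe by blast
      have "uf \<epsilon> \<mu> \<in> L_set T \<omega>" using L_opE[OF uL, of q] q usum by simp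
      then show ?thesis by (rule eig_lim[OF nz ufe])
    qed
    then have "(\<Sum>\<mu>\<in>\<Lambda>. c \<mu>) \<in> L_set T \<omega>"
      by (intro eigsum_L[OF fin]) (use eig in auto)
    then show "x0 \<in> L_set T \<omega>" by (simp add: x0)
  qed
  have "\<forall>n. \<exists>\<epsilon>. cmod \<epsilon> < inverse (real (Suc n)) \<and> \<epsilon> \<notin> Bd"
    using avoid_finite_c[OF fBd] by simp
  from choice[OF this] obtain E where E: "\<forall>n. cmod (E n) < inverse (real (Suc n)) \<and> E n \<notin> Bd"
    by blast
  have le: "norm (E n) \<le> inverse (real (Suc n))" for n using E less_imp_le by blast
  have "(\<lambda>n. norm (E n)) \<longlonglongrightarrow> 0"
    by (rule null_comp[where f="\<lambda>n. norm (E n)" and g="\<lambda>n. inverse (real (Suc n))", OF _ le LIMSEQ_inverse_real_of_nat]) simp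
  then have "E \<longlonglongrightarrow> 0" by (rule tendsto_norm_zero_cancel)
  then have "(\<lambda>n. w + smul (E n) x0) \<longlonglongrightarrow> w + smul 0 x0"
    by (intro tendsto_add tendsto_const smul_tendsto)
  then have "(\<lambda>n. w + smul (E n) x0) \<longlonglongrightarrow> w" by simp
  moreover have "\<forall>n. w + smul (E n) x0 \<in> Hr T" using good E by blast
  ultimately show ?thesis by (auto simp: closure_sequential)
qed

theorem main:
  assumes hr: "hyper_recurrent T" and infd: "\<not> (\<exists>B. finite B \<and> V.span B = UNIV)"
  shows "\<exists>M. inf_dim_subspace smul M \<and> T ` M \<subseteq> M \<and> M \<subseteq> closure (Hr T)"
proof -
  have full: "\<exists>M. inf_dim_subspace smul M \<and> T ` M \<subseteq> M \<and> M \<subseteq> closure (Hr T)"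
    if "closure (Hr T) = UNIV"
    using that infd by (intro exI[of _ UNIV]) (auto simp: inf_dim_subspace_def)
  obtain x0 where x0H: "x0 \<in> Hr T" using hr by (auto simp: hyper_recurrent_def)
  show ?thesis
  proof (cases "x0 = 0")
    case True
    have "Rec T \<subseteq> Hr T"
    proof
      fix x assume x: "x \<in> Rec T"
      have "closure (L_set T \<omega>) = UNIV" if "\<omega> \<in> C_set T" for \<omega>
        using x0H True L_zero that by (auto simp: Hr_def)
      then show "x \<in> Hr T" using x by (auto simp: Hr_def)
    qed
    then have "closure (Rec T) \<subseteq> closure (Hr T)" by (rule closure_mono)
    then have "closure (Hr T) = UNIV" using hr by (auto simp: hyper_recurrent_def)
    then show ?thesis by (rule full)
  next
    case False
    have RU: "Rec T = UNIV" by (rule Rec_UNIV[OF x0H False])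
    show ?thesis
    proof (cases "\<exists>z\<in>Hr T. \<forall>p. p \<noteq> 0 \<longrightarrow> opE p z \<noteq> 0")
      case True
      then obtain z where z: "z \<in> Hr T" "\<forall>p. p \<noteq> 0 \<longrightarrow> opE p z \<noteq> 0" by blast
      show ?thesis using caseA_M[OF z(1) RU z(2)] by blast
    next
      case False
      then have alg: "\<exists>p. p \<noteq> 0 \<and> opE p z = 0" if "z \<in> Hr T" for z using that by blast
      obtain m where m: "m \<noteq> 0" "opE m x0 = 0" using alg[OF x0H] by blast
      have "eigsum x0" by (rule algebraic_eigsum[OF m])
      then obtain \<Lambda> c where L: "finite \<Lambda>" "x0 = (\<Sum>\<mu>\<in>\<Lambda>. c \<mu>)"
        "\<forall>\<mu>\<in>\<Lambda>. T (c \<mu>) = smul \<mu> (c \<mu>) \<and> c \<mu> \<noteq> 0" "\<forall>\<mu>. \<mu> \<notin> \<Lambda> \<longrightarrow> c \<mu> = 0"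
        using eigsum_nf by blast
      obtain \<delta> where d: "\<delta> > 0"
        "\<forall>t y \<omega>. cmod t * norm y < \<delta> \<longrightarrow> x0 + smul t y \<in> L_set T \<omega> \<longrightarrow> x0 \<in> L_set T \<omega>"
        using TT[OF L(1,2,3)] by blast
      have allalg: "\<exists>p. p \<noteq> 0 \<and> opE p y = 0" for y
      proof (rule ccontr)
        assume ny: "\<not> (\<exists>p. p \<noteq> 0 \<and> opE p y = 0)"
        define r where "r = \<delta> / (2 * (norm y + 1))"
        have n1: "0 < norm y + 1" using norm_ge_zero[of y] by linarith
        have r0: "r > 0" unfolding r_def using d(1) n1 by simp
        define t where "t = complex_of_real r"
        have t0: "t \<noteq> 0" using r0 by (simp add: t_def)
        have ny2: "norm y < 2 * (norm y + 1)" using norm_ge_zero[of y] by (smt (verit))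
        have n2: "2 * (norm y + 1) \<noteq> 0" using n1 by simp
        have "r * norm y < r * (2 * (norm y + 1))" using r0 ny2 by (intro mult_strict_left_mono)
        also have "\<dots> = \<delta>" unfolding r_def using n2 by simp
        finally have small: "cmod t * norm y < \<delta>" using r0 by (simp add: t_def)
        have "x0 + smul t y \<in> Hr T"
          by (rule HrI[OF x0H RU]) (use d(2) small in blast)
        then obtain q where q: "q \<noteq> 0" "opE q (x0 + smul t y) = 0" using alg by blast
        have "opE (m * q) y = 0" by (rule alg_transfer[OF m(2) q(2) t0])
        moreover have "m * q \<noteq> 0" using m(1) q(1) by simp
        ultimately show False using ny by blast
      qed
      have "w \<in> closure (Hr T)" for w
      proof -
        obtain p where "p \<noteq> 0" "opE p w = 0" using allalg by blast
        then have "eigsum w" by (rule algebraic_eigsum)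
        then show ?thesis by (rule density_B2[OF x0H RU L])
      qed
      then have "closure (Hr T) = UNIV" by blast
      then show ?thesis by (rule full)
    qed
  qed
qed

end


theorem proposition5p4:
  fixes smul :: "complex \<Rightarrow> 'a::banach \<Rightarrow> 'a" and T :: "'a \<Rightarrow> 'a"
  assumes "complex_banach_structure smul"
    and "\<not> (\<exists>B. finite B \<and> module.span smul B = UNIV)"
    and "Vector_Spaces.linear smul smul T"
    and "\<And>x. norm (T x) = norm x"
    and "surj T"
    and "hyper_recurrent T"
  shows "\<exists>M. inf_dim_subspace smul M \<and> T ` M \<subseteq> M \<and> M \<subseteq> closure (Hr T)"
proof -
  interpret hset smul T
    by (rule hset.intro) (use assms(1,3,4) in auto)
  show ?thesis by (rule main[OF assms(6) assms(2)])
qed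

end
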